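(* Let $\psi_1=\tfrac{1}{\sqrt2}(|0\rangle|0\rangle+|1\rangle|1\rangle)\in\mathbb{C}^2\otimes\mathbb{C}^2$, and for unitaries $U,V$ on $\mathbb{C}^2$ let $P_{U,V}$ be the orthogonal projector onto $\mathbb{C}(U\otimes V)\psi_1$. Then $E_{\mathrm{HS}}(P_{U,V})=1/3$, and for every state $\sigma$ on $\mathbb{C}^2\otimes\mathbb{C}^2$ one has $E_{\mathrm{HS}}(\sigma)\le 1/3$; i.e. these Bell states are maximally entangled with respect to the Hilbert–Schmidt entanglement.
   Context: $\mathcal T$ denotes the set of states (positive operators of trace one) on $\mathbb{C}^2\otimes\mathbb{C}^2$. The set of disentangled states is $\mathcal D=\{\rho\in\mathcal T:\rho=\sum_k p_k\rho^{(1)}_k\otimes\rho^{(2)}_k,\ p_k\ge0,\ \sum_k p_k=1,\ \rho^{(1)}_k,\rho^{(2)}_k \text{ states on }\mathbb{C}^2\}$. The Hilbert–Schmidt norm is $\|A\|_{\mathrm{HS}}^2=\mathrm{tr}(A^*A)$, and the Hilbert–Schmidt entanglement of a state $\sigma$ is $E_{\mathrm{HS}}(\sigma)=\min_{\rho\in\mathcal D}\|\rho-\sigma\|_{\mathrm{HS}}^2$. *)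

theory Defs
  imports Complex_Main
begin

text \<open>Operators on a finite-dimensional Hilbert space with orthonormal basis indexed
  by a finite type 'i are represented by their matrices 'i => 'i => complex.
  C^2 has basis indexed by bool (False = |0>, True = |1>);
  C^2 (x) C^2 has basis indexed by bool \<times> bool.\<close>

type_synonym 'i cmat = "'i \<Rightarrow> 'i \<Rightarrow> complex"
type_synonym 'i cvec = "'i \<Rightarrow> complex"

definition mmult :: "('i::finite) cmat \<Rightarrow> 'i cmat \<Rightarrow> 'i cmat" where
  "mmult A B = (\<lambda>i k. \<Sum>j\<in>UNIV. A i j * B j k)"

definition mvmult :: "('i::finite) cmat \<Rightarrow> 'i cvec \<Rightarrow> 'i cvec" where
  "mvmult A v = (\<lambda>i. \<Sum>j\<in>UNIV. A i j * v j)"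

definition adjoint :: "'i cmat \<Rightarrow> 'i cmat" where
  "adjoint A = (\<lambda>i j. cnj (A j i))"

definition id_mat :: "'i cmat" where
  "id_mat = (\<lambda>i j. if i = j then 1 else 0)"

definition mtrace :: "('i::finite) cmat \<Rightarrow> complex" where
  "mtrace A = (\<Sum>i\<in>UNIV. A i i)"

definition cinner :: "('i::finite) cvec \<Rightarrow> 'i cvec \<Rightarrow> complex" where
  "cinner v w = (\<Sum>i\<in>UNIV. cnj (v i) * w i)"

definition positive_op :: "('i::finite) cmat \<Rightarrow> bool" where
  "positive_op A \<longleftrightarrow> (\<forall>v. Im (cinner v (mvmult A v)) = 0 \<and> Re (cinner v (mvmult A v)) \<ge> 0)"

definition is_state :: "('i::finite) cmat \<Rightarrow> bool" where
  "is_state A \<longleftrightarrow> positive_op A \<and> mtrace A = 1"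

definition unitary :: "('i::finite) cmat \<Rightarrow> bool" where
  "unitary U \<longleftrightarrow> mmult (adjoint U) U = id_mat \<and> mmult U (adjoint U) = id_mat"

definition kron :: "'a cmat \<Rightarrow> 'b cmat \<Rightarrow> ('a \<times> 'b) cmat" where
  "kron A B = (\<lambda>(i, j) (k, l). A i k * B j l)"

definition disentangled :: "(bool \<times> bool) cmat \<Rightarrow> bool" where
  "disentangled \<rho> \<longleftrightarrow> is_state \<rho> \<and>
     (\<exists>(n::nat) (p::nat \<Rightarrow> real) (r1::nat \<Rightarrow> bool cmat) (r2::nat \<Rightarrow> bool cmat).
        (\<forall>k<n. p k \<ge> 0 \<and> is_state (r1 k) \<and> is_state (r2 k)) \<and>
        (\<Sum>k<n. p k) = 1 \<and>
        \<rho> = (\<lambda>x y. \<Sum>k<n. complex_of_real (p k) * kron (r1 k) (r2 k) x y))"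

definition hs_norm_sq :: "('i::finite) cmat \<Rightarrow> real" where
  "hs_norm_sq A = Re (mtrace (mmult (adjoint A) A))"

text \<open>Hilbert-Schmidt entanglement: the minimum (here: infimum; it is attained since
  the set of disentangled states is compact) of ||rho - sigma||^2 over disentangled rho.\<close>
definition E_HS :: "(bool \<times> bool) cmat \<Rightarrow> real" where
  "E_HS \<sigma> = Inf {hs_norm_sq (\<lambda>i j. \<rho> i j - \<sigma> i j) | \<rho>. disentangled \<rho>}"

definition psi1 :: "(bool \<times> bool) cvec" where
  "psi1 = (\<lambda>(i, j). if i = j then complex_of_real (1 / sqrt 2) else 0)"

definition proj_line :: "('i::finite) cvec \<Rightarrow> 'i cmat" where
  "proj_line \<phi> = (\<lambda>i j. \<phi> i * cnj (\<phi> j) / cinner \<phi> \<phi>)"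

definition bell_proj :: "bool cmat \<Rightarrow> bool cmat \<Rightarrow> (bool \<times> bool) cmat" where
  "bell_proj U V = proj_line (mvmult (kron U V) psi1)"

end

theory Submission
  imports Defs
begin

lemma sum_bool: "(\<Sum>x\<in>(UNIV::bool set). f x) = f False + f True"
  by (simp add: UNIV_bool)

lemma sum_prod_split: "(\<Sum>x\<in>(UNIV::('a::finite\<times>'b::finite) set). f x) = (\<Sum>a\<in>UNIV. \<Sum>b\<in>UNIV. f (a,b))"
proof -
  have "(\<Sum>x\<in>(UNIV::('a\<times>'b) set). f x) = (\<Sum>(a,b)\<in>UNIV \<times> UNIV. f (a,b))"
    by simp
  also have "\<dots> = (\<Sum>a\<in>UNIV. \<Sum>b\<in>UNIV. f (a,b))"
    by (rule sum.cartesian_product[symmetric])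
  finally show ?thesis .
qed

lemma sum_bb: "(\<Sum>x\<in>(UNIV::(bool\<times>bool) set). f x) =
   f (False,False) + f (False,True) + f (True,False) + f (True,True)"
  by (simp add: sum_prod_split sum_bool add.assoc)

lemma sum_delta_r: "(\<Sum>l\<in>(UNIV::('i::finite) set). (f l::complex) * (if l = i then s else 0)) = f i * s"
proof -
  have *: "(\<lambda>l. f l * (if l = i then s else 0)) = (\<lambda>l. if i = l then f i * s else 0)" by (intro ext) auto
  show ?thesis by (subst *) simp
qed

lemma sum_delta_l: "(\<Sum>l\<in>(UNIV::('i::finite) set). (if l = i then s else 0) * (f l::complex)) = s * f i"
proof -
  have *: "(\<lambda>l. (if l = i then s else 0) * f l) = (\<lambda>l. if i = l then s * f i else 0)" by (intro ext) auto
  show ?thesis by (subst *) simp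
qed

definition vec2 :: "'i \<Rightarrow> complex \<Rightarrow> 'i \<Rightarrow> complex \<Rightarrow> 'i cvec" where
  "vec2 i s j w = (\<lambda>k. (if k = i then s else 0) + (if k = j then w else 0))"

lemma mv_vec2: "mvmult (A::('i::finite) cmat) (vec2 i s j w) = (\<lambda>k. A k i * s + A k j * w)"
  by (simp add: mvmult_def vec2_def distrib_left sum.distrib sum_delta_r)

lemma cinner_vec2: "cinner (vec2 i s j w) (u::('i::finite) cvec) = cnj s * u i + cnj w * u j"
proof -
  have "cnj (vec2 i s j w k) = (if k = i then cnj s else 0) + (if k = j then cnj w else 0)" for k
    by (simp add: vec2_def)
  then show ?thesis
    by (simp add: cinner_def distrib_right sum.distrib sum_delta_l)
qed

lemma quad_vec2: "cinner (vec2 i s j w) (mvmult (A::('i::finite) cmat) (vec2 i s j w)) =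
   cnj s * (A i i * s + A i j * w) + cnj w * (A j i * s + A j j * w)"
  by (simp add: mv_vec2 cinner_vec2)

lemma posD: "positive_op A \<Longrightarrow> Im (cinner v (mvmult A v)) = 0 \<and> 0 \<le> Re (cinner v (mvmult A v))"
  by (simp add: positive_op_def)

lemma pos_diag:
  assumes "positive_op (A::('i::finite) cmat)"
  shows "Im (A i i) = 0" "0 \<le> Re (A i i)" "A i i = complex_of_real (Re (A i i))"
proof -
  have "cinner (vec2 i 1 i 0) (mvmult A (vec2 i 1 i 0)) = A i i" by (simp add: quad_vec2)
  with posD[OF assms, of "vec2 i 1 i 0"] show "Im (A i i) = 0" "0 \<le> Re (A i i)" by auto
  then show "A i i = complex_of_real (Re (A i i))" by (simp add: complex_eq_iff)
qed

lemma pos_herm: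
  assumes "positive_op (A::('i::finite) cmat)"
  shows "A j i = cnj (A i j)"
proof (cases "i = j")
  case True
  then show ?thesis using pos_diag[OF assms, of i] by (simp add: complex_eq_iff)
next
  case False
  have q1: "cinner (vec2 i 1 j 1) (mvmult A (vec2 i 1 j 1)) = A i i + A i j + (A j i + A j j)"
    by (simp add: quad_vec2)
  have q2: "cinner (vec2 i 1 j \<i>) (mvmult A (vec2 i 1 j \<i>)) = A i i + A i j * \<i> - \<i> * (A j i + A j j * \<i>)"
    by (simp add: quad_vec2)
  have a: "Im (A i j) + Im (A j i) = 0"
    using posD[OF assms, of "vec2 i 1 j 1"] pos_diag[OF assms, of i] pos_diag[OF assms, of j]
    unfolding q1 by simp
  have b: "Re (A i j) - Re (A j i) = 0"
    using posD[OF assms, of "vec2 i 1 j \<i>"] pos_diag[OF assms, of i] pos_diag[OF assms, of j]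
    unfolding q2 by (simp add: algebra_simps)
  show ?thesis using a b by (simp add: complex_eq_iff)
qed

lemma lin_nonneg_zero:
  fixes r c :: real
  assumes "\<And>t. 0 \<le> 2 * t * r + c"
  shows "r = 0"
proof (rule ccontr)
  assume "r \<noteq> 0"
  have "0 \<le> 2 * (- (\<bar>c\<bar> + 1) / (2 * r)) * r + c" by (rule assms)
  also have "2 * (- (\<bar>c\<bar> + 1) / (2 * r)) * r = - (\<bar>c\<bar> + 1)" using \<open>r \<noteq> 0\<close> by (simp add: field_simps)
  finally show False by linarith
qed

lemma pos_zero:
  assumes "positive_op (A::('i::finite) cmat)" and "A i i = 0"
  shows "A i j = 0"
proof (cases "i = j")
  case True then show ?thesis using assms by simp
next
  case False
  have h: "A j i = cnj (A i j)" by (rule pos_herm[OF assms(1)])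
  have "Re (A i j) = 0"
  proof (rule lin_nonneg_zero[where c = "Re (A j j)"])
    fix t :: real
    have "cinner (vec2 i (of_real t) j 1) (mvmult A (vec2 i (of_real t) j 1)) =
       of_real t * A i j + cnj (A i j) * of_real t + A j j"
      using assms(2) h by (simp add: quad_vec2)
    then show "0 \<le> 2 * t * Re (A i j) + Re (A j j)"
      using posD[OF assms(1), of "vec2 i (of_real t) j 1"] by simp
  qed
  moreover have "Im (A i j) = 0"
  proof (rule lin_nonneg_zero[where c = "Re (A j j)"])
    fix t :: real
    have "cinner (vec2 i (\<i> * of_real t) j 1) (mvmult A (vec2 i (\<i> * of_real t) j 1)) =
       - \<i> * of_real t * A i j + \<i> * cnj (A i j) * of_real t + A j j"
      using assms(2) h by (simp add: quad_vec2)
    then show "0 \<le> 2 * t * Im (A i j) + Re (A j j)"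
      using posD[OF assms(1), of "vec2 i (\<i> * of_real t) j 1"] by simp
  qed
  ultimately show ?thesis by (simp add: complex_eq_iff)
qed

lemma schur:
  assumes pos: "positive_op (A::('i::finite) cmat)" and ai: "Re (A i i) > 0"
  shows "positive_op (\<lambda>k l. A k l - (A k i / of_real (sqrt (Re (A i i)))) * cnj (A l i / of_real (sqrt (Re (A i i)))))"
  unfolding positive_op_def
proof
  fix x :: "'i cvec"
  define a where "a = Re (A i i)"
  have aii: "A i i = of_real a" using pos_diag[OF pos, of i] a_def by simp
  have apos: "a > 0" using ai a_def by simp
  define b where "b = (\<lambda>k. A k i / of_real (sqrt a))"
  define g where "g = mvmult A x i"
  define c where "c = - g / of_real a"
  define y where "y = (\<lambda>k. x k + (if k = i then c else 0))"
  have herm: "\<And>k. A k i = cnj (A i k)" using pos_herm[OF pos] by blast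
  have my: "mvmult A y = (\<lambda>k. mvmult A x k + A k i * c)"
    by (simp add: y_def mvmult_def distrib_left sum.distrib sum_delta_r)
  have ci: "cinner y z = cinner x z + cnj c * z i" for z
  proof -
    have "cnj (y k) = cnj (x k) + (if k = i then cnj c else 0)" for k by (simp add: y_def)
    then show ?thesis by (simp add: cinner_def distrib_right sum.distrib sum_delta_l)
  qed
  have sg: "(\<Sum>k\<in>UNIV. cnj (x k) * A k i) = cnj g"
  proof -
    have "(\<Sum>k\<in>UNIV. cnj (x k) * A k i) = (\<Sum>k\<in>UNIV. cnj (A i k * x k))"
      by (intro sum.cong refl) (subst herm, simp add: mult.commute)
    then show ?thesis by (simp add: g_def mvmult_def)
  qed
  have cx: "cinner x (\<lambda>k. u k + A k i * c) = cinner x u + c * cnj g" for u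
  proof -
    have "cinner x (\<lambda>k. u k + A k i * c) = cinner x u + (\<Sum>k\<in>UNIV. cnj (x k) * A k i) * c"
      by (simp add: cinner_def distrib_left sum.distrib sum_distrib_right mult.assoc)
    then show ?thesis using sg by simp
  qed
  have yq: "cinner y (mvmult A y) = cinner x (mvmult A x) - cnj g * g / of_real a"
  proof -
    have g': "mvmult A x i = g" by (simp add: g_def)
    have cc: "cnj c = - cnj g / of_real a" by (simp add: c_def)
    have "g + of_real a * c = 0" using apos by (simp add: c_def)
    then have "cnj c * (g + of_real a * c) = 0" by simp
    moreover have "c * cnj g = - cnj g * g / of_real a" by (simp add: c_def)
    ultimately show ?thesis unfolding my ci cx g' aii by simp
  qed
  have sa: "of_real (sqrt a) * of_real (sqrt a) = (of_real a :: complex)"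
    using apos by (simp flip: of_real_mult)
  have mx: "mvmult (\<lambda>k l. A k l - b k * cnj (b l)) x = (\<lambda>k. mvmult A x k - b k * (\<Sum>l\<in>UNIV. cnj (b l) * x l))"
    by (simp add: mvmult_def left_diff_distrib sum_subtractf sum_distrib_left mult.assoc)
  have h: "(\<Sum>l\<in>UNIV. cnj (b l) * x l) = g / of_real (sqrt a)"
  proof -
    have "(\<Sum>l\<in>UNIV. cnj (b l) * x l) = (\<Sum>l\<in>UNIV. A i l * x l / of_real (sqrt a))"
      unfolding b_def by (intro sum.cong refl) (subst herm, simp)
    then show ?thesis by (simp add: g_def mvmult_def sum_divide_distrib)
  qed
  have h2: "(\<Sum>k\<in>UNIV. cnj (x k) * b k) = cnj g / of_real (sqrt a)"
  proof -
    have "(\<Sum>k\<in>UNIV. cnj (x k) * b k) = cnj (\<Sum>l\<in>UNIV. cnj (b l) * x l)"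
      by (simp add: mult.commute)
    then show ?thesis using h by simp
  qed
  have xq: "cinner x (mvmult (\<lambda>k l. A k l - b k * cnj (b l)) x) = cinner x (mvmult A x) - cnj g * g / of_real a"
  proof -
    have "cinner x (mvmult (\<lambda>k l. A k l - b k * cnj (b l)) x) =
       cinner x (mvmult A x) - (\<Sum>k\<in>UNIV. cnj (x k) * b k) * (\<Sum>l\<in>UNIV. cnj (b l) * x l)"
      unfolding mx by (simp add: cinner_def right_diff_distrib sum_subtractf sum_distrib_right mult.assoc)
    also have "\<dots> = cinner x (mvmult A x) - cnj g * g / (of_real (sqrt a) * of_real (sqrt a))"
      unfolding h h2 by simp
    also have "\<dots> = cinner x (mvmult A x) - cnj g * g / of_real a"
      unfolding sa ..
    finally show ?thesis .
  qed
  show "Im (cinner x (mvmult (\<lambda>k l. A k l - A k i / complex_of_real (sqrt (Re (A i i))) * cnj (A l i / complex_of_real (sqrt (Re (A i i))))) x)) = 0 \<and>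
        0 \<le> Re (cinner x (mvmult (\<lambda>k l. A k l - A k i / complex_of_real (sqrt (Re (A i i))) * cnj (A l i / complex_of_real (sqrt (Re (A i i))))) x))"
    using xq yq posD[OF pos, of y] unfolding b_def a_def by simp
qed

lemma mult_cnj_self: "z * cnj z = complex_of_real ((cmod z)^2)"
  by (rule complex_norm_square[symmetric])
lemma cnj_mult_self: "cnj z * z = complex_of_real ((cmod z)^2)"
  by (subst mult.commute) (rule complex_norm_square[symmetric])

lemma pos_minor:
  assumes pos: "positive_op (A::('i::finite) cmat)"
  shows "(cmod (A i j))^2 \<le> Re (A i i) * Re (A j j)"
proof (cases "Re (A i i) = 0")
  case True
  then have "A i i = 0" using pos_diag[OF pos, of i] by (simp add: complex_eq_iff)
  then have "A i j = 0" by (rule pos_zero[OF pos])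
  then show ?thesis using True by simp
next
  case False
  then have ap: "Re (A i i) > 0" using pos_diag[OF pos, of i] by simp
  define a where "a = Re (A i i)"
  have "0 \<le> Re (A j j - (A j i / of_real (sqrt a)) * cnj (A j i / of_real (sqrt a)))"
    using pos_diag(2)[OF schur[OF pos ap], of j] by (simp add: a_def)
  also have "(A j i / of_real (sqrt a)) * cnj (A j i / of_real (sqrt a)) = of_real ((cmod (A j i))^2 / a)"
  proof -
    have "(A j i / of_real (sqrt a)) * cnj (A j i / of_real (sqrt a)) = (A j i * cnj (A j i)) / (of_real (sqrt a) * of_real (sqrt a))"
      by simp
    also have "of_real (sqrt a) * of_real (sqrt a) = (of_real a :: complex)"
      using ap a_def by (simp flip: of_real_mult)
    finally show ?thesis by (simp add: mult_cnj_self)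
  qed
  finally have "(cmod (A j i))^2 / a \<le> Re (A j j)" by simp
  moreover have "cmod (A j i) = cmod (A i j)" by (simp add: pos_herm[OF pos, of j i])
  ultimately show ?thesis using ap unfolding a_def by (simp add: field_simps)
qed

inductive rdec :: "('i::finite) cmat \<Rightarrow> bool" where
  rdec0: "rdec (\<lambda>i j. 0)"
| rdecS: "rdec A \<Longrightarrow> rdec (\<lambda>i j. A i j + b i * cnj (b j))"

lemma chol_aux:
  assumes "finite S"
  shows "positive_op (A::('i::finite) cmat) \<Longrightarrow> (\<forall>i j. A i j \<noteq> 0 \<longrightarrow> i \<in> S \<and> j \<in> S) \<Longrightarrow> rdec A"
  using assms
proof (induction S arbitrary: A rule: finite_induct)
  case empty
  then have "A = (\<lambda>i j. 0)" by (intro ext) auto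
  then show ?case by (simp add: rdec0)
next
  case (insert i S)
  note pos = insert.prems(1)
  show ?case
  proof (cases "Re (A i i) = 0")
    case True
    then have aii: "A i i = 0" using pos_diag[OF pos, of i] by (simp add: complex_eq_iff)
    have r: "A i j = 0" for j by (rule pos_zero[OF pos aii])
    have c: "A j i = 0" for j using pos_herm[OF pos, of j i] r[of j] by simp
    have "\<forall>k l. A k l \<noteq> 0 \<longrightarrow> k \<in> S \<and> l \<in> S"
      using insert.prems(2) r c by blast
    then show ?thesis using insert.IH[OF pos] by blast
  next
    case False
    then have ap: "Re (A i i) > 0" using pos_diag[OF pos, of i] by simp
    define a where "a = Re (A i i)"
    have apos: "a > 0" using ap a_def by simp
    define b where "b = (\<lambda>k. A k i / of_real (sqrt a))"
    define A' where "A' = (\<lambda>k l. A k l - b k * cnj (b l))"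
    have pos': "positive_op A'" unfolding A'_def b_def a_def by (rule schur[OF pos ap])
    have aii: "A i i = of_real a" using pos_diag[OF pos, of i] a_def by simp
    have sa: "of_real (sqrt a) * of_real (sqrt a) = (of_real a :: complex)"
      using apos by (simp flip: of_real_mult)
    have sa0: "(of_real (sqrt a) :: complex) \<noteq> 0" using apos by simp
    have bi: "b i = of_real (sqrt a)"
      unfolding b_def aii using sa sa0 by (simp add: field_simps)
    have row: "A' i l = 0" for l
    proof -
      have "b i * cnj (b l) = cnj (A l i)" unfolding b_def using sa0 apos by (simp add: sa aii)
      also have "\<dots> = A i l" using pos_herm[OF pos, of i l] by simp
      finally show ?thesis unfolding A'_def by simp
    qed
    have col: "A' k i = 0" for k
    proof -
      have "b k * cnj (b i) = A k i" unfolding b_def using sa0 apos by (simp add: sa aii)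
      then show ?thesis unfolding A'_def by simp
    qed
    have out: "A' k l = 0" if "k \<notin> insert i S \<or> l \<notin> insert i S" for k l
    proof -
      have bk: "b k = 0" if "k \<notin> insert i S" for k
        using insert.prems(2) that unfolding b_def by auto
      have "A k l = 0" using that insert.prems(2) by blast
      then show ?thesis using that bk[of k] bk[of l] unfolding A'_def by auto
    qed
    have "\<forall>k l. A' k l \<noteq> 0 \<longrightarrow> k \<in> S \<and> l \<in> S"
      using row col out by (metis insert_iff)
    then have "rdec A'" using insert.IH[OF pos'] by blast
    then have "rdec (\<lambda>k l. A' k l + b k * cnj (b l))" by (rule rdecS)
    moreover have "(\<lambda>k l. A' k l + b k * cnj (b l)) = A" unfolding A'_def by simp
    ultimately show ?thesis by simp
  qed
qed

lemma chol: "positive_op (A::('i::finite) cmat) \<Longrightarrow> rdec A"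
  by (rule chol_aux[of UNIV]) auto

lemma cinner_mv_adj: "cinner (mvmult (W::('i::finite) cmat) x) y = cinner x (mvmult (adjoint W) y)"
  unfolding cinner_def mvmult_def adjoint_def
  apply (simp add: sum_distrib_left sum_distrib_right)
  apply (subst sum.swap)
  apply (simp add: mult_ac)
  done


lemma mvmult_mmult: "mvmult (mmult (A::('i::finite) cmat) B) x = mvmult A (mvmult B x)"
  unfolding mvmult_def mmult_def
  apply (rule ext)
  apply (simp add: sum_distrib_left sum_distrib_right)
  apply (subst sum.swap)
  apply (simp add: mult_ac)
  done

lemma mmult_assoc: "mmult (mmult (A::('i::finite) cmat) B) C = mmult A (mmult B C)"
  unfolding mmult_def
  apply (intro ext)
  apply (simp add: sum_distrib_left sum_distrib_right)
  apply (subst sum.swap)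
  apply (simp add: mult_ac)
  done

lemma mmult_id_right: "mmult (A::('i::finite) cmat) id_mat = A"
proof (intro ext)
  fix i k
  have "(\<Sum>j\<in>UNIV. A i j * (if j = k then 1 else 0)) = A i k" using sum_delta_r[of "A i" k 1] by simp
  then show "mmult A id_mat i k = A i k" by (simp add: mmult_def id_mat_def)
qed

lemma mvmult_id: "mvmult id_mat (x::('i::finite) cvec) = x"
proof -
  have "(\<Sum>j\<in>UNIV. (if i = j then 1 else 0) * x j) = x i" for i
    using sum_delta_l[of i 1 x] by (simp add: eq_commute)
  then show ?thesis by (simp add: mvmult_def id_mat_def)
qed

lemma mtrace_comm: "mtrace (mmult (A::('i::finite) cmat) B) = mtrace (mmult B A)"
  unfolding mtrace_def mmult_def
  apply (subst sum.swap)
  apply (simp add: mult_ac)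
  done

lemma mmult_kron: "mmult (kron (A::('a::finite) cmat) (B::('b::finite) cmat)) (kron C D) = kron (mmult A C) (mmult B D)"
proof (intro ext)
  fix x y :: "'a \<times> 'b"
  obtain i j where x: "x = (i,j)" by (cases x)
  obtain k l where y: "y = (k,l)" by (cases y)
  show "mmult (kron A B) (kron C D) x y = kron (mmult A C) (mmult B D) x y"
    by (simp add: x y mmult_def kron_def sum_prod_split sum_product mult_ac)
qed

lemma adjoint_kron: "adjoint (kron A B) = kron (adjoint A) (adjoint B)"
proof (intro ext)
  fix x y :: "'a \<times> 'b"
  obtain i j where x: "x = (i,j)" by (cases x)
  obtain k l where y: "y = (k,l)" by (cases y)
  show "adjoint (kron A B) x y = kron (adjoint A) (adjoint B) x y"
    by (simp add: x y adjoint_def kron_def)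
qed

lemma kron_id: "kron id_mat id_mat = id_mat"
proof (intro ext)
  fix x y :: "'a \<times> 'b"
  obtain i j where x: "x = (i,j)" by (cases x)
  obtain k l where y: "y = (k,l)" by (cases y)
  show "kron id_mat id_mat x y = id_mat x y"
    by (simp add: x y id_mat_def kron_def)
qed

lemma outer_pos: "positive_op (\<lambda>i j. (x::('i::finite) cvec) i * cnj (x j))"
  unfolding positive_op_def
proof
  fix v :: "'i cvec"
  define h where "h = (\<Sum>j\<in>UNIV. cnj (x j) * v j)"
  have "cinner v (mvmult (\<lambda>i j. x i * cnj (x j)) v) = (\<Sum>i\<in>UNIV. cnj (v i) * x i) * h"
    by (simp add: cinner_def mvmult_def h_def sum_distrib_left sum_distrib_right mult_ac)
  also have "(\<Sum>i\<in>UNIV. cnj (v i) * x i) = cnj h" by (simp add: h_def mult.commute)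
  finally have "cinner v (mvmult (\<lambda>i j. x i * cnj (x j)) v) = of_real ((cmod h)^2)"
    by (simp add: cnj_mult_self)
  then show "Im (cinner v (mvmult (\<lambda>i j. x i * cnj (x j)) v)) = 0 \<and> 0 \<le> Re (cinner v (mvmult (\<lambda>i j. x i * cnj (x j)) v))"
    by simp
qed

lemma outer_state: "cinner x x = 1 \<Longrightarrow> is_state (\<lambda>i j. (x::('i::finite) cvec) i * cnj (x j))"
  unfolding is_state_def using outer_pos[of x] by (simp add: mtrace_def cinner_def mult.commute)

lemma conj_pos: "positive_op (r::('i::finite) cmat) \<Longrightarrow> positive_op (mmult (adjoint U) (mmult r U))"
  unfolding positive_op_def
  by (simp add: mvmult_mmult cinner_mv_adj[symmetric])

lemma conj_state:
  assumes "unitary (U::('i::finite) cmat)" "is_state r"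
  shows "is_state (mmult (adjoint U) (mmult r U))"
proof -
  have "mtrace (mmult (adjoint U) (mmult r U)) = mtrace (mmult (mmult r U) (adjoint U))"
    by (rule mtrace_comm)
  also have "\<dots> = mtrace r" using assms(1) by (simp add: mmult_assoc unitary_def mmult_id_right)
  finally show ?thesis using assms(2) conj_pos unfolding is_state_def by auto
qed

definition outer :: "'i cvec \<Rightarrow> 'i cmat" where
  "outer x = (\<lambda>i j. x i * cnj (x j))"

inductive sepc :: "(bool \<times> bool) cmat \<Rightarrow> bool" where
  sepc0: "sepc (\<lambda>i j. 0)"
| sepcS: "sepc X \<Longrightarrow> 0 \<le> p \<Longrightarrow> is_state r1 \<Longrightarrow> is_state r2 \<Longrightarrow>
     sepc (\<lambda>i j. X i j + of_real p * kron r1 r2 i j)"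

lemma sepc_repr:
  assumes "sepc X"
  shows "\<exists>(n::nat) (p::nat \<Rightarrow> real) (r1::nat \<Rightarrow> bool cmat) (r2::nat \<Rightarrow> bool cmat).
        (\<forall>k<n. p k \<ge> 0 \<and> is_state (r1 k) \<and> is_state (r2 k)) \<and>
        X = (\<lambda>x y. \<Sum>k<n. complex_of_real (p k) * kron (r1 k) (r2 k) x y)"
  using assms
proof (induction rule: sepc.induct)
  case sepc0
  show ?case by (rule exI[of _ 0]) simp
next
  case (sepcS X p' s1 s2)
  then obtain n :: nat and p :: "nat \<Rightarrow> real" and r1 r2 :: "nat \<Rightarrow> bool cmat" where h: "\<forall>k<n. p k \<ge> 0 \<and> is_state (r1 k) \<and> is_state (r2 k)"
    and X: "X = (\<lambda>x y. \<Sum>k<n. complex_of_real (p k) * kron (r1 k) (r2 k) x y)"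
    by (elim exE conjE) (rule that, assumption+)
  let ?p = "p(n := p')" and ?r1 = "r1(n := s1)" and ?r2 = "r2(n := s2)"
  have "\<forall>k<Suc n. ?p k \<ge> 0 \<and> is_state (?r1 k) \<and> is_state (?r2 k)"
    using h sepcS by (auto simp: less_Suc_eq)
  moreover have "(\<lambda>i j. X i j + of_real p' * kron s1 s2 i j) =
      (\<lambda>x y. \<Sum>k<Suc n. complex_of_real (?p k) * kron (?r1 k) (?r2 k) x y)"
  proof (intro ext)
    fix x y
    have "(\<Sum>k<n. complex_of_real (?p k) * kron (?r1 k) (?r2 k) x y) =
          (\<Sum>k<n. complex_of_real (p k) * kron (r1 k) (r2 k) x y)"
      by (intro sum.cong) auto
    then show "X x y + of_real p' * kron s1 s2 x y =
      (\<Sum>k<Suc n. complex_of_real (?p k) * kron (?r1 k) (?r2 k) x y)"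
      by (simp add: X)
  qed
  ultimately show ?case by blast
qed

lemma mtrace_kron: "mtrace (kron (A::('a::finite) cmat) (B::('b::finite) cmat)) = mtrace A * mtrace B"
  by (simp add: mtrace_def kron_def sum_prod_split sum_product)

lemma sepc_disent:
  assumes "sepc \<rho>" "is_state \<rho>"
  shows "disentangled \<rho>"
proof -
  obtain n :: nat and p :: "nat \<Rightarrow> real" and r1 r2 :: "nat \<Rightarrow> bool cmat" where h: "\<forall>k<n. p k \<ge> 0 \<and> is_state (r1 k) \<and> is_state (r2 k)"
    and X: "\<rho> = (\<lambda>x y. \<Sum>k<n. complex_of_real (p k) * kron (r1 k) (r2 k) x y)"
    using sepc_repr[OF assms(1)] by (elim exE conjE) (rule that, assumption+)
  have "mtrace \<rho> = (\<Sum>k<n. complex_of_real (p k) * mtrace (kron (r1 k) (r2 k)))"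
    unfolding X mtrace_def
    by (subst sum.swap) (simp add: sum_distrib_left)
  also have "\<dots> = (\<Sum>k<n. complex_of_real (p k))"
    using h by (intro sum.cong refl) (simp add: mtrace_kron is_state_def)
  finally have "(\<Sum>k<n. p k) = 1" using assms(2) unfolding is_state_def
    by (metis of_real_eq_1_iff of_real_sum)
  then show ?thesis unfolding disentangled_def using assms(2) h X by blast
qed

lemma sepc_add: "sepc Y \<Longrightarrow> sepc X \<Longrightarrow> sepc (\<lambda>i j. X i j + Y i j)"
proof (induction rule: sepc.induct)
  case sepc0
  then show ?case by simp
next
  case (sepcS Y p r1 r2)
  have "sepc (\<lambda>i j. (X i j + Y i j) + of_real p * kron r1 r2 i j)"
    by (rule sepc.sepcS) (use sepcS in auto)
  then show ?case by (simp add: add.assoc)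
qed

lemma sepc_scale: "sepc X \<Longrightarrow> 0 \<le> c \<Longrightarrow> sepc (\<lambda>i j. of_real c * X i j)"
proof (induction rule: sepc.induct)
  case sepc0
  then show ?case by (simp add: sepc.sepc0)
next
  case (sepcS Y p r1 r2)
  have "sepc (\<lambda>i j. of_real c * Y i j + of_real (c * p) * kron r1 r2 i j)"
    by (rule sepc.sepcS) (use sepcS in auto)
  then show ?case by (simp add: algebra_simps)
qed

lemma cinner_self: "cinner x x = of_real (\<Sum>i\<in>UNIV. (cmod ((x::('i::finite) cvec) i))^2)"
  by (simp add: cinner_def cnj_mult_self)

lemma outer_scale: "outer (\<lambda>i. of_real c * x i) = (\<lambda>i j. of_real (c^2) * outer x i j)"
  by (simp add: outer_def fun_eq_iff power2_eq_square mult_ac)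

lemma kron_scale: "kron (\<lambda>i j. of_real a * A i j) (\<lambda>i j. of_real b * B i j) = (\<lambda>x y. of_real (a*b) * kron A B x y)"
  by (simp add: kron_def fun_eq_iff split: prod.splits)

lemma outer_normal:
  assumes "x \<noteq> (\<lambda>i. 0::complex)" and "True \<or> (x::('i::finite) cvec) = x"
  shows "\<exists>n s. n > 0 \<and> is_state s \<and> outer x = (\<lambda>i j. of_real n * s i j)"
proof -
  define n where "n = (\<Sum>i\<in>UNIV. (cmod (x i))^2)"
  have n0: "n \<ge> 0" unfolding n_def by (simp add: sum_nonneg)
  have "n \<noteq> 0"
  proof
    assume "n = 0"
    then have "\<forall>i\<in>UNIV. (cmod (x i))^2 = 0" unfolding n_def
      by (subst sum_nonneg_eq_0_iff[symmetric]) auto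
    then have "x = (\<lambda>i. 0)" by (auto simp: fun_eq_iff)
    with assms show False by simp
  qed
  with n0 have np: "n > 0" by simp
  define y where "y = (\<lambda>i. of_real (1 / sqrt n) * x i)"
  have "(cmod (y i))^2 = (1/n) * (cmod (x i))^2" for i
  proof -
    have "cmod (y i) = cmod (x i) / sqrt n" using np by (simp add: y_def norm_divide)
    then show ?thesis using np by (simp add: power_divide)
  qed
  then have "cinner y y = of_real ((1/n) * n)"
    by (simp add: cinner_self n_def sum_distrib_left)
  then have yy: "cinner y y = 1" using np by simp
  have "outer y = (\<lambda>i j. of_real (1 / n) * outer x i j)"
    unfolding y_def outer_scale using np by (simp add: power_divide)
  then have "outer x = (\<lambda>i j. of_real n * outer y i j)" using np by (simp add: fun_eq_iff)
  moreover have "is_state (outer y)" unfolding outer_def by (rule outer_state[OF yy])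
  ultimately show ?thesis using np by blast
qed

lemma sepc_outer:
  assumes "sepc X" "0 \<le> p"
  shows "sepc (\<lambda>i j. X i j + of_real p * kron (outer x) (outer y) i j)"
proof (cases "x = (\<lambda>i. 0) \<or> y = (\<lambda>i. 0)")
  case True
  then have "kron (outer x) (outer y) = (\<lambda>i j. 0)"
    by (auto simp: kron_def outer_def fun_eq_iff split: prod.splits)
  then show ?thesis using assms by simp
next
  case False
  obtain n s where n: "n > 0" "is_state s" "outer x = (\<lambda>i j. of_real n * s i j)"
    using outer_normal False by blast
  obtain m t where m: "m > 0" "is_state t" "outer y = (\<lambda>i j. of_real m * t i j)"
    using outer_normal False by blast
  have "sepc (\<lambda>i j. X i j + of_real (p * (n * m)) * kron s t i j)"
    by (rule sepcS) (use assms n m in auto)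
  then show ?thesis unfolding n(3) m(3) kron_scale by (simp add: mult_ac)
qed

definition perp :: "bool cvec \<Rightarrow> bool cvec" where
  "perp u = (\<lambda>i. if i then cnj (u False) else - cnj (u True))"

lemma cinner_bool: "cinner (x::bool cvec) y = cnj (x False) * y False + cnj (x True) * y True"
  by (simp add: cinner_def sum_bool)

lemma perp_complete:
  assumes "cinner u u = 1"
  shows "u i * cnj (u j) + perp u i * cnj (perp u j) = (if i = j then 1 else 0)"
proof -
  have "cnj (u False) * u False + cnj (u True) * u True = 1" using assms by (simp add: cinner_bool)
  then show ?thesis by (cases i; cases j) (simp_all add: perp_def algebra_simps)
qed

lemma perp_orth: "cinner (perp x) x = 0"
  by (simp add: perp_def cinner_bool mult.commute)

lemma perp_scale: "perp (\<lambda>i. of_real c * x i) = (\<lambda>i. of_real c * perp x i)"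
  by (simp add: perp_def fun_eq_iff)

lemma perp_zero: "perp x = (\<lambda>i. 0) \<Longrightarrow> x = (\<lambda>i. 0)"
proof -
  assume a: "perp x = (\<lambda>i. 0)"
  have "perp x True = 0" "perp x False = 0" using a by simp_all
  then have "x True = 0" "x False = 0" by (simp_all add: perp_def)
  then show ?thesis by (intro ext) (case_tac i, simp_all)
qed

lemma cinner_scale: "cinner (\<lambda>i. of_real c * x i) y = of_real c * cinner x (y::('i::finite) cvec)"
  by (simp add: cinner_def sum_distrib_left mult_ac)

lemma cinner_scale_r: "cinner x (\<lambda>i. of_real c * y i) = of_real c * cinner x (y::('i::finite) cvec)"
  by (simp add: cinner_def sum_distrib_left mult_ac)

lemma normalize_ex:
  assumes "x \<noteq> (\<lambda>i. 0::complex)"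
  shows "\<exists>c. cinner (\<lambda>i. of_real c * x i) (\<lambda>i. of_real c * (x::('i::finite) cvec) i) = 1"
proof -
  define n where "n = (\<Sum>i\<in>UNIV. (cmod (x i))^2)"
  have n0: "n \<ge> 0" unfolding n_def by (simp add: sum_nonneg)
  have "n \<noteq> 0"
  proof
    assume "n = 0"
    then have "\<forall>i\<in>UNIV. (cmod (x i))^2 = 0" unfolding n_def
      by (subst sum_nonneg_eq_0_iff[symmetric]) auto
    then have "x = (\<lambda>i. 0)" by (auto simp: fun_eq_iff)
    with assms show False by simp
  qed
  with n0 have np: "n > 0" by simp
  define y where "y = (\<lambda>i. of_real (1 / sqrt n) * x i)"
  have "(cmod (y i))^2 = (1/n) * (cmod (x i))^2" for i
  proof -
    have "cmod (y i) = cmod (x i) / sqrt n" using np by (simp add: y_def norm_divide)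
    then show ?thesis using np by (simp add: power_divide)
  qed
  then have "cinner y y = of_real ((1/n) * n)"
    by (simp add: cinner_self n_def sum_distrib_left)
  then have yy: "cinner y y = 1" using np by simp
  then show ?thesis unfolding y_def by blast
qed

definition Cmap :: "(bool \<times> bool) cvec \<Rightarrow> bool cvec \<Rightarrow> bool cvec" where
  "Cmap \<psi> w = (\<lambda>i. \<psi> (i,False) * w False + \<psi> (i,True) * w True)"

lemma Cmap_scale: "Cmap \<psi> (\<lambda>i. of_real c * w i) = (\<lambda>i. of_real c * Cmap \<psi> w i)"
  by (simp add: Cmap_def fun_eq_iff algebra_simps)

lemma Q_formula:
  "cinner (Cmap \<psi> w) (Cmap \<psi> (perp w)) =
     (cnj (\<psi> (False,False)) * \<psi> (False,True) + cnj (\<psi> (True,False)) * \<psi> (True,True)) * cnj (w False)^2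
   + ((cnj (\<psi> (False,True)) * \<psi> (False,True) + cnj (\<psi> (True,True)) * \<psi> (True,True))
      - (cnj (\<psi> (False,False)) * \<psi> (False,False) + cnj (\<psi> (True,False)) * \<psi> (True,False))) * cnj (w False) * cnj (w True)
   - cnj (cnj (\<psi> (False,False)) * \<psi> (False,True) + cnj (\<psi> (True,False)) * \<psi> (True,True)) * cnj (w True)^2"
  by (simp add: cinner_bool Cmap_def perp_def algebra_simps power2_eq_square)

lemma quad_root:
  fixes q :: complex and d :: real
  assumes "q \<noteq> 0"
  defines "s \<equiv> sqrt (d^2 + 4 * (cmod q)^2)"
  defines "z \<equiv> of_real (d + s) / (2 * q)"
  shows "q * z^2 - of_real d * z - cnj q = 0"
proof -
  define D where "D = (of_real d :: complex)"
  define S where "S = (of_real s :: complex)"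
  have s2: "s^2 = d^2 + 4 * (cmod q)^2" unfolding s_def by (simp add: add_nonneg_nonneg)
  have S2: "S^2 = D^2 + 4 * (q * cnj q)"
    unfolding S_def D_def complex_norm_square[symmetric]
    by (metis s2 of_real_add of_real_mult of_real_numeral of_real_power)
  have zq: "2 * q * z = D + S" unfolding z_def D_def S_def using assms(1) by simp
  have "4 * q * (q * z^2 - D * z - cnj q) = (2*q*z)^2 - 2 * D * (2*q*z) - 4 * (q * cnj q)"
    by (simp add: algebra_simps power2_eq_square)
  also have "\<dots> = 0" unfolding zq using S2 by (simp add: algebra_simps power2_eq_square)
  finally show ?thesis using assms(1) unfolding D_def by simp
qed

lemma exists_w: "\<exists>w. cinner w w = 1 \<and> cinner (Cmap \<psi> w) (Cmap \<psi> (perp w)) = 0"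
proof -
  define q where "q = cnj (\<psi> (False,False)) * \<psi> (False,True) + cnj (\<psi> (True,False)) * \<psi> (True,True)"
  define p where "p = cnj (\<psi> (False,False)) * \<psi> (False,False) + cnj (\<psi> (True,False)) * \<psi> (True,False)"
  define r where "r = cnj (\<psi> (False,True)) * \<psi> (False,True) + cnj (\<psi> (True,True)) * \<psi> (True,True)"
  have Q: "cinner (Cmap \<psi> w) (Cmap \<psi> (perp w)) = q * cnj (w False)^2 + (r - p) * cnj (w False) * cnj (w True) - cnj q * cnj (w True)^2" for w
    unfolding Q_formula p_def q_def r_def ..
  have "\<exists>w0. w0 \<noteq> (\<lambda>i. 0) \<and> cinner (Cmap \<psi> w0) (Cmap \<psi> (perp w0)) = 0"
  proof (cases "q = 0")
    case True
    define w0 where "w0 = (\<lambda>i::bool. if i then 0 else (1::complex))"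
    have "w0 \<noteq> (\<lambda>i. 0)" by (auto simp: w0_def fun_eq_iff)
    moreover have "cinner (Cmap \<psi> w0) (Cmap \<psi> (perp w0)) = 0" unfolding Q using True by (simp add: w0_def)
    ultimately show ?thesis by blast
  next
    case False
    define d where "d = Re p - Re r"
    define z where "z = of_real (d + sqrt (d^2 + 4 * (cmod q)^2)) / (2 * q)"
    have root: "q * z^2 - of_real d * z - cnj q = 0" unfolding z_def by (rule quad_root[OF False])
    have pr: "p = of_real (Re p)" "r = of_real (Re r)"
      by (simp_all add: p_def r_def complex_eq_iff)
    have rp: "r - p = - of_real d" unfolding d_def by (subst pr(1), subst pr(2)) simp
    define w0 where "w0 = (\<lambda>i::bool. if i then 1 else cnj z)"
    have "w0 \<noteq> (\<lambda>i. 0)" by (auto simp: w0_def fun_eq_iff)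
    moreover have "cinner (Cmap \<psi> w0) (Cmap \<psi> (perp w0)) = 0" unfolding Q rp using root
      by (simp add: w0_def algebra_simps power2_eq_square)
    ultimately show ?thesis by blast
  qed
  then obtain w0 where w0: "w0 \<noteq> (\<lambda>i. 0)" "cinner (Cmap \<psi> w0) (Cmap \<psi> (perp w0)) = 0" by blast
  obtain c where c: "cinner (\<lambda>i. of_real c * w0 i) (\<lambda>i. of_real c * w0 i) = 1"
    using normalize_ex[OF w0(1)] by blast
  have "cinner (Cmap \<psi> (\<lambda>i. of_real c * w0 i)) (Cmap \<psi> (perp (\<lambda>i. of_real c * w0 i))) = 0"
    unfolding perp_scale Cmap_scale cinner_scale cinner_scale_r using w0(2) by simp
  then show ?thesis using c by blast
qed

lemma cinner_zero_r: "cinner x (\<lambda>i. 0) = (0::complex)"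
  by (simp add: cinner_def)

lemma exists_u:
  fixes Cw Cp :: "bool cvec"
  assumes "cinner Cw Cp = 0"
  shows "\<exists>u. cinner u u = 1 \<and> cinner u Cp = 0 \<and> cinner (perp u) Cw = 0"
proof (cases "Cw = (\<lambda>i. 0)")
  case False
  obtain c where c: "cinner (\<lambda>i. of_real c * Cw i) (\<lambda>i. of_real c * Cw i) = 1"
    using normalize_ex[OF False] by blast
  have "cinner (\<lambda>i. of_real c * Cw i) Cp = 0" unfolding cinner_scale using assms by simp
  moreover have "cinner (perp (\<lambda>i. of_real c * Cw i)) Cw = 0"
    unfolding perp_scale cinner_scale perp_orth by simp
  ultimately show ?thesis using c by blast
next
  case True
  show ?thesis
  proof (cases "Cp = (\<lambda>i. 0)")
    case True2: True
    define u where "u = (\<lambda>i::bool. if i then 0 else (1::complex))"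
    have "cinner u u = 1" by (simp add: u_def cinner_bool)
    then show ?thesis using True True2 by (auto simp: cinner_zero_r)
  next
    case False
    then have nz: "perp Cp \<noteq> (\<lambda>i. 0)" using perp_zero by blast
    obtain c where c: "cinner (\<lambda>i. of_real c * perp Cp i) (\<lambda>i. of_real c * perp Cp i) = 1"
      using normalize_ex[OF nz] by blast
    have "cinner (\<lambda>i. of_real c * perp Cp i) Cp = 0" unfolding cinner_scale perp_orth by simp
    moreover have "cinner (perp (\<lambda>i. of_real c * perp Cp i)) Cw = 0"
      using True by (simp add: cinner_zero_r)
    ultimately show ?thesis using c by blast
  qed
qed

definition coef :: "(bool \<times> bool) cvec \<Rightarrow> bool cvec \<Rightarrow> bool cvec \<Rightarrow> complex" where
  "coef \<psi> x y = (\<Sum>i\<in>UNIV. \<Sum>j\<in>UNIV. cnj (x i) * cnj (y j) * \<psi> (i,j))"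

lemma expand4:
  assumes u: "cinner u u = 1" and v: "cinner v v = 1"
  shows "\<psi> (i,j) = coef \<psi> u v * u i * v j + coef \<psi> u (perp v) * u i * perp v j
     + coef \<psi> (perp u) v * perp u i * v j + coef \<psi> (perp u) (perp v) * perp u i * perp v j"
proof -
  have "coef \<psi> u v * u i * v j + coef \<psi> u (perp v) * u i * perp v j
     + coef \<psi> (perp u) v * perp u i * v j + coef \<psi> (perp u) (perp v) * perp u i * perp v j
     = (\<Sum>i'\<in>UNIV. \<Sum>j'\<in>UNIV. (u i * cnj (u i') + perp u i * cnj (perp u i')) *
                (v j * cnj (v j') + perp v j * cnj (perp v j')) * \<psi> (i',j'))"
    by (simp add: coef_def sum_bool algebra_simps)
  also have "\<dots> = (\<Sum>i'\<in>UNIV. \<Sum>j'\<in>UNIV. (if i = i' then 1 else 0) * (if j = j' then 1 else 0) * \<psi> (i',j'))"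
    by (simp only: perp_complete[OF u] perp_complete[OF v])
  also have "\<dots> = \<psi> (i,j)" by (cases i; cases j) (simp_all add: sum_bool)
  finally show ?thesis by simp
qed

lemma schmidt:
  "\<exists>u v a c. cinner u u = 1 \<and> cinner v v = 1 \<and>
      (\<forall>i j. \<psi> (i,j) = a * u i * v j + c * perp u i * perp v j)"
proof -
  obtain w where w1: "cinner w w = 1" and wq: "cinner (Cmap \<psi> w) (Cmap \<psi> (perp w)) = 0"
    using exists_w by blast
  define v where "v = (\<lambda>i. cnj (w i))"
  have v1: "cinner v v = 1" using w1 by (simp add: v_def cinner_bool mult.commute)
  have pv: "(\<lambda>j. cnj (perp v j)) = perp w" by (simp add: v_def perp_def fun_eq_iff)
  obtain u where u1: "cinner u u = 1" and m1: "cinner u (Cmap \<psi> (perp w)) = 0"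
      and m2: "cinner (perp u) (Cmap \<psi> w) = 0"
    using exists_u[OF wq] by blast
  have c1: "coef \<psi> u (perp v) = cinner u (Cmap \<psi> (perp w))"
    unfolding pv[symmetric] by (simp add: coef_def cinner_bool Cmap_def sum_bool algebra_simps)
  have c2: "coef \<psi> (perp u) v = cinner (perp u) (Cmap \<psi> w)"
    by (simp add: coef_def cinner_bool Cmap_def sum_bool algebra_simps v_def)
  have "\<forall>i j. \<psi> (i,j) = coef \<psi> u v * u i * v j + coef \<psi> (perp u) (perp v) * perp u i * perp v j"
  proof (intro allI)
    fix i j
    show "\<psi> (i,j) = coef \<psi> u v * u i * v j + coef \<psi> (perp u) (perp v) * perp u i * perp v j"
      using expand4[OF u1 v1, of \<psi> i j] c1 c2 m1 m2 by simp
  qed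
  then show ?thesis using u1 v1 by blast
qed

lemma gadget_poly:
  fixes A1 A2 B1 B2 c1 c2 d1 d2 \<tau> T I :: complex
  assumes "\<tau> * T = 1" "I * I = -1"
  shows "(A1 + A2) * (c1 + c2) * ((B1 + T * B2) * (d1 + \<tau> * d2))
       + (A1 + I * A2) * (c1 - I * c2) * ((B1 - I * T * B2) * (d1 + I * \<tau> * d2))
       + (A1 - A2) * (c1 - c2) * ((B1 - T * B2) * (d1 - \<tau> * d2))
       + (A1 - I * A2) * (c1 + I * c2) * ((B1 + I * T * B2) * (d1 - I * \<tau> * d2))
     = 4 * ((A1 * c1 + A2 * c2) * (B1 * d1 + B2 * d2)
            + \<tau> * (A1 * B1 * c2 * d2) + T * (A2 * B2 * c1 * d1))"
  using assms by algebra

lemma gadget: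
  fixes A1 A2 B1 B2 C1 C2 D1 D2 \<tau> :: complex
  assumes t: "\<tau> * cnj \<tau> = 1"
  shows "(A1 + A2) * cnj (C1 + C2) * ((B1 + cnj \<tau> * B2) * cnj (D1 + cnj \<tau> * D2))
       + (A1 + \<i> * A2) * cnj (C1 + \<i> * C2) * ((B1 - \<i> * cnj \<tau> * B2) * cnj (D1 - \<i> * cnj \<tau> * D2))
       + (A1 - A2) * cnj (C1 - C2) * ((B1 - cnj \<tau> * B2) * cnj (D1 - cnj \<tau> * D2))
       + (A1 - \<i> * A2) * cnj (C1 - \<i> * C2) * ((B1 + \<i> * cnj \<tau> * B2) * cnj (D1 + \<i> * cnj \<tau> * D2))
     = 4 * ((A1 * cnj C1 + A2 * cnj C2) * (B1 * cnj D1 + B2 * cnj D2)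
            + \<tau> * (A1 * B1 * cnj C2 * cnj D2) + cnj \<tau> * (A2 * B2 * cnj C1 * cnj D1))"
proof -
  have e: "cnj (C1 + \<i> * C2) = cnj C1 - \<i> * cnj C2" "cnj (C1 - \<i> * C2) = cnj C1 + \<i> * cnj C2"
     "cnj (D1 - \<i> * cnj \<tau> * D2) = cnj D1 + \<i> * \<tau> * cnj D2"
     "cnj (D1 + \<i> * cnj \<tau> * D2) = cnj D1 - \<i> * \<tau> * cnj D2"
     "cnj (D1 + cnj \<tau> * D2) = cnj D1 + \<tau> * cnj D2"
     "cnj (D1 - cnj \<tau> * D2) = cnj D1 - \<tau> * cnj D2"
     "cnj (C1 + C2) = cnj C1 + cnj C2" "cnj (C1 - C2) = cnj C1 - cnj C2"
    by simp_all
  show ?thesis unfolding e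
    by (rule gadget_poly[OF t]) simp
qed

lemma final_poly:
  fixes a c ca cc A1 A2 B1 B2 c1 c2 d1 d2 \<tau> T' T AA CC W G \<delta> :: complex
  assumes "T * \<tau> = a * cc" "T * T' = ca * c" "AA = a * ca" "CC = c * cc"
    "W = (AA + CC) / 6 - T / 3"
    "G = 4 * (\<delta> + \<tau> * (A1 * B1 * c2 * d2) + T' * (A2 * B2 * c1 * d1))"
    "\<delta> = (A1 * c1 + A2 * c2) * (B1 * d1 + B2 * d2)"
  shows "(a * A1 * B1 + c * A2 * B2) * (ca * c1 * d1 + cc * c2 * d2) / 3 + (ca * a + cc * c) * \<delta> / 6
     = AA / 3 * (A1 * c1 * (B1 * d1)) + CC / 3 * (A2 * c2 * (B2 * d2)) + T / 12 * G + W * 4 * (\<delta> / 4)"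
  using assms by algebra

lemma id_half_state: "is_state (\<lambda>i j::bool. id_mat i j / 2)"
proof -
  have "mvmult (\<lambda>i j::bool. id_mat i j / 2) v = (\<lambda>i. v i / 2)" for v
    using mvmult_id[of v] by (simp add: mvmult_def sum_divide_distrib[symmetric] fun_eq_iff)
  then have h: "cinner v (mvmult (\<lambda>i j::bool. id_mat i j / 2) v) = of_real ((\<Sum>i\<in>UNIV. (cmod (v i))^2) / 2)" for v
    by (simp add: cinner_def sum_divide_distrib[symmetric] cinner_self[unfolded cinner_def])
  have "positive_op (\<lambda>i j::bool. id_mat i j / 2)"
    unfolding positive_op_def
  proof
    fix v :: "bool cvec"
    show "Im (cinner v (mvmult (\<lambda>i j. id_mat i j / 2) v)) = 0 \<and> 0 \<le> Re (cinner v (mvmult (\<lambda>i j. id_mat i j / 2) v))"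
      unfolding h Im_complex_of_real Re_complex_of_real by (simp add: sum_nonneg)
  qed
  moreover have "mtrace (\<lambda>i j::bool. id_mat i j / 2) = 1"
    by (simp add: mtrace_def id_mat_def sum_bool)
  ultimately show ?thesis by (simp add: is_state_def)
qed

lemma cinner_psi:
  "cinner (\<lambda>x. a * u (fst x) * v (snd x) + c * perp u (fst x) * perp v (snd x))
          (\<lambda>x. a * u (fst x) * v (snd x) + c * perp u (fst x) * perp v (snd x))
   = (cnj a * a + cnj c * c) * cinner u u * cinner v v"
  by (simp add: cinner_def sum_bb sum_bool perp_def algebra_simps)

lemma pure_sep: "sepc (\<lambda>x y. \<psi> x * cnj (\<psi> y) / 3 + cinner \<psi> \<psi> * id_mat x y / 6)"
proof -
  obtain u v a c where u1: "cinner u u = 1" and v1: "cinner v v = 1"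
    and h: "\<forall>i j. \<psi> (i,j) = a * u i * v j + c * perp u i * perp v j"
    using schmidt[of \<psi>] by blast
  have psi_eq: "\<psi> = (\<lambda>x. a * u (fst x) * v (snd x) + c * perp u (fst x) * perp v (snd x))"
  proof (intro ext)
    fix x :: "bool \<times> bool"
    show "\<psi> x = a * u (fst x) * v (snd x) + c * perp u (fst x) * perp v (snd x)"
      using h by (cases x) simp
  qed
  have psinorm: "cinner \<psi> \<psi> = cnj a * a + cnj c * c"
    unfolding psi_eq cinner_psi u1 v1 by simp
  define t where "t = a * cnj c"
  define \<tau> where "\<tau> = (if t = 0 then 1 else t / of_real (cmod t))"
  have tt: "\<tau> * cnj \<tau> = 1"
  proof (cases "t = 0")
    case True then show ?thesis by (simp add: \<tau>_def)
  next
    case False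
    then have "\<tau> * cnj \<tau> = (t * cnj t) / (of_real (cmod t) * of_real (cmod t))" by (simp add: \<tau>_def)
    also have "t * cnj t = of_real ((cmod t)^2)" by (rule mult_cnj_self)
    finally show ?thesis using False by (simp add: power2_eq_square)
  qed
  have t0: "of_real (cmod t) * \<tau> = t"
    by (cases "t = 0") (simp_all add: \<tau>_def)
  then have t1: "of_real (cmod t) * \<tau> = a * cnj c" by (simp add: t_def)
  have t2: "of_real (cmod t) * cnj \<tau> = cnj a * c"
  proof -
    have "cnj (of_real (cmod t) * \<tau>) = cnj (a * cnj c)" using t1 by simp
    then show ?thesis by simp
  qed
  have bound: "cmod t \<le> ((cmod a)^2 + (cmod c)^2) / 2"
  proof -
    have "cmod t = cmod a * cmod c" by (simp add: t_def norm_mult)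
    moreover have "0 \<le> (cmod a - cmod c)^2" by simp
    ultimately show ?thesis by (simp add: power2_eq_square algebra_simps)
  qed
  define w7 where "w7 = ((cmod a)^2 + (cmod c)^2) / 6 - cmod t / 3"
  have w7: "w7 \<ge> 0" using bound unfolding w7_def by simp
  define pu where "pu = perp u"
  define pv where "pv = perp v"
  define x1 where "x1 = (\<lambda>i. u i + pu i)"
  define x2 where "x2 = (\<lambda>i. u i + \<i> * pu i)"
  define x3 where "x3 = (\<lambda>i. u i - pu i)"
  define x4 where "x4 = (\<lambda>i. u i - \<i> * pu i)"
  define y1 where "y1 = (\<lambda>i. v i + cnj \<tau> * pv i)"
  define y2 where "y2 = (\<lambda>i. v i - \<i> * cnj \<tau> * pv i)"
  define y3 where "y3 = (\<lambda>i. v i - cnj \<tau> * pv i)"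
  define y4 where "y4 = (\<lambda>i. v i + \<i> * cnj \<tau> * pv i)"
  define p1 where "p1 = (cmod a)^2 / 3"
  define p2 where "p2 = (cmod c)^2 / 3"
  define p3 where "p3 = cmod t / 12"
  define I2 where "I2 = (\<lambda>i j::bool. id_mat i j / 2)"
  have s0: "sepc (\<lambda>i j. 0)" by (rule sepc0)
  have s1: "sepc (\<lambda>i j. 0 + of_real p1 * kron (outer u) (outer v) i j)"
    by (rule sepc_outer[OF s0]) (simp add: p1_def)
  have s2: "sepc (\<lambda>i j. (0 + of_real p1 * kron (outer u) (outer v) i j)
        + of_real p2 * kron (outer pu) (outer pv) i j)"
    by (rule sepc_outer[OF s1]) (simp add: p2_def)
  have s3: "sepc (\<lambda>i j. ((0 + of_real p1 * kron (outer u) (outer v) i j)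
        + of_real p2 * kron (outer pu) (outer pv) i j) + of_real p3 * kron (outer x1) (outer y1) i j)"
    by (rule sepc_outer[OF s2]) (simp add: p3_def)
  have s4: "sepc (\<lambda>i j. (((0 + of_real p1 * kron (outer u) (outer v) i j)
        + of_real p2 * kron (outer pu) (outer pv) i j) + of_real p3 * kron (outer x1) (outer y1) i j)
        + of_real p3 * kron (outer x2) (outer y2) i j)"
    by (rule sepc_outer[OF s3]) (simp add: p3_def)
  have s5: "sepc (\<lambda>i j. ((((0 + of_real p1 * kron (outer u) (outer v) i j)
        + of_real p2 * kron (outer pu) (outer pv) i j) + of_real p3 * kron (outer x1) (outer y1) i j)
        + of_real p3 * kron (outer x2) (outer y2) i j) + of_real p3 * kron (outer x3) (outer y3) i j)"
    by (rule sepc_outer[OF s4]) (simp add: p3_def)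
  have s6: "sepc (\<lambda>i j. (((((0 + of_real p1 * kron (outer u) (outer v) i j)
        + of_real p2 * kron (outer pu) (outer pv) i j) + of_real p3 * kron (outer x1) (outer y1) i j)
        + of_real p3 * kron (outer x2) (outer y2) i j) + of_real p3 * kron (outer x3) (outer y3) i j)
        + of_real p3 * kron (outer x4) (outer y4) i j)"
    by (rule sepc_outer[OF s5]) (simp add: p3_def)
  have s7: "sepc (\<lambda>i j. ((((((0 + of_real p1 * kron (outer u) (outer v) i j)
        + of_real p2 * kron (outer pu) (outer pv) i j) + of_real p3 * kron (outer x1) (outer y1) i j)
        + of_real p3 * kron (outer x2) (outer y2) i j) + of_real p3 * kron (outer x3) (outer y3) i j)
        + of_real p3 * kron (outer x4) (outer y4) i j) + of_real (w7 * 4) * kron I2 I2 i j)"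
    by (rule sepcS[OF s6]) (simp_all add: w7 I2_def id_half_state)
  have eq: "(\<lambda>x y. \<psi> x * cnj (\<psi> y) / 3 + cinner \<psi> \<psi> * id_mat x y / 6) =
     (\<lambda>i j. ((((((0 + of_real p1 * kron (outer u) (outer v) i j)
        + of_real p2 * kron (outer pu) (outer pv) i j) + of_real p3 * kron (outer x1) (outer y1) i j)
        + of_real p3 * kron (outer x2) (outer y2) i j) + of_real p3 * kron (outer x3) (outer y3) i j)
        + of_real p3 * kron (outer x4) (outer y4) i j) + of_real (w7 * 4) * kron I2 I2 i j)"
  proof (intro ext)
    fix x y :: "bool \<times> bool"
    obtain i1 i2 where x: "x = (i1, i2)" by (cases x)
    obtain j1 j2 where y: "y = (j1, j2)" by (cases y)
    define \<delta> where "\<delta> = id_mat x y"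
    have d: "\<delta> = (u i1 * cnj (u j1) + pu i1 * cnj (pu j1)) * (v i2 * cnj (v j2) + pv i2 * cnj (pv j2))"
      unfolding \<delta>_def x y pu_def pv_def perp_complete[OF u1] perp_complete[OF v1]
      by (simp add: id_mat_def)
    have kI: "kron I2 I2 x y = \<delta> / 4"
      by (simp add: \<delta>_def x y I2_def kron_def id_mat_def)
    have G: "kron (outer x1) (outer y1) x y + kron (outer x2) (outer y2) x y + kron (outer x3) (outer y3) x y
        + kron (outer x4) (outer y4) x y
       = 4 * ((u i1 * cnj (u j1) + pu i1 * cnj (pu j1)) * (v i2 * cnj (v j2) + pv i2 * cnj (pv j2))
            + \<tau> * (u i1 * v i2 * cnj (pu j1) * cnj (pv j2)) + cnj \<tau> * (pu i1 * pv i2 * cnj (u j1) * cnj (v j2)))"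
      unfolding x y kron_def outer_def x1_def x2_def x3_def x4_def y1_def y2_def y3_def y4_def
      using gadget[OF tt, of "u i1" "pu i1" "u j1" "pu j1" "v i2" "pv i2" "v j2" "pv j2"]
      by simp
    have lhs: "\<psi> x * cnj (\<psi> y) / 3 + cinner \<psi> \<psi> * id_mat x y / 6 =
       (a * u i1 * v i2 + c * pu i1 * pv i2) * (cnj a * cnj (u j1) * cnj (v j2) + cnj c * cnj (pu j1) * cnj (pv j2)) / 3
       + (cnj a * a + cnj c * c) * \<delta> / 6"
      unfolding psinorm \<delta>_def by (simp add: x y h pu_def pv_def)
    have rhs: "((((((0 + of_real p1 * kron (outer u) (outer v) x y)
        + of_real p2 * kron (outer pu) (outer pv) x y) + of_real p3 * kron (outer x1) (outer y1) x y)
        + of_real p3 * kron (outer x2) (outer y2) x y) + of_real p3 * kron (outer x3) (outer y3) x y)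
        + of_real p3 * kron (outer x4) (outer y4) x y) + of_real (w7 * 4) * kron I2 I2 x y
      = of_real ((cmod a)^2) / 3 * (u i1 * cnj (u j1) * (v i2 * cnj (v j2)))
        + of_real ((cmod c)^2) / 3 * (pu i1 * cnj (pu j1) * (pv i2 * cnj (pv j2)))
        + of_real (cmod t) / 12 * (kron (outer x1) (outer y1) x y + kron (outer x2) (outer y2) x y + kron (outer x3) (outer y3) x y
        + kron (outer x4) (outer y4) x y) + of_real w7 * 4 * (\<delta> / 4)"
      unfolding kI by (simp add: x y kron_def outer_def p1_def p2_def p3_def algebra_simps)
    show "\<psi> x * cnj (\<psi> y) / 3 + cinner \<psi> \<psi> * id_mat x y / 6 =
      ((((((0 + of_real p1 * kron (outer u) (outer v) x y)
        + of_real p2 * kron (outer pu) (outer pv) x y) + of_real p3 * kron (outer x1) (outer y1) x y)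
        + of_real p3 * kron (outer x2) (outer y2) x y) + of_real p3 * kron (outer x3) (outer y3) x y)
        + of_real p3 * kron (outer x4) (outer y4) x y) + of_real (w7 * 4) * kron I2 I2 x y"
      unfolding lhs rhs G
      apply (rule final_poly)
      using t1 t2 d by (simp_all add: w7_def complex_norm_square[unfolded of_real_power] mult.commute)
  qed
  show ?thesis unfolding eq by (rule s7)
qed

lemma state_sep_aux: "rdec A \<Longrightarrow> sepc (\<lambda>x y. A x y / 3 + mtrace A * id_mat x y / 6)"
proof (induction rule: rdec.induct)
  case rdec0
  have "mtrace (\<lambda>i j::bool\<times>bool. 0::complex) = 0" by (simp add: mtrace_def)
  then show ?case using sepc0 by simp
next
  case (rdecS A b)
  have tr: "mtrace (\<lambda>i j. A i j + b i * cnj (b j)) = mtrace A + cinner b b"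
    by (simp add: mtrace_def cinner_def sum.distrib mult.commute)
  have "sepc (\<lambda>x y. (A x y / 3 + mtrace A * id_mat x y / 6) + (b x * cnj (b y) / 3 + cinner b b * id_mat x y / 6))"
    by (rule sepc_add[OF pure_sep rdecS.IH])
  moreover have "(\<lambda>x y. (A x y / 3 + mtrace A * id_mat x y / 6) + (b x * cnj (b y) / 3 + cinner b b * id_mat x y / 6))
     = (\<lambda>x y. (A x y + b x * cnj (b y)) / 3 + mtrace (\<lambda>i j. A i j + b i * cnj (b j)) * id_mat x y / 6)"
    unfolding tr by (simp add: fun_eq_iff algebra_simps add_divide_distrib)
  ultimately show ?case by simp
qed

lemma mtrace_id_bb: "mtrace (id_mat :: (bool \<times> bool) cmat) = 4"
  unfolding mtrace_def id_mat_def sum_bb by simp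

lemma mv_lin: "mvmult (\<lambda>x y. \<alpha> * A x y + \<beta> * id_mat x y) v = (\<lambda>x. \<alpha> * mvmult A v x + \<beta> * (v::('i::finite) cvec) x)"
proof -
  have "mvmult id_mat v = v" by (rule mvmult_id)
  then show ?thesis
    by (simp add: mvmult_def fun_eq_iff distrib_right sum.distrib sum_distrib_left[symmetric] mult.assoc)
qed

lemma state_mix:
  assumes "is_state (\<sigma>::(bool \<times> bool) cmat)"
  shows "disentangled (\<lambda>x y. \<sigma> x y / 3 + id_mat x y / 6)"
proof (rule sepc_disent)
  have tr: "mtrace \<sigma> = 1" using assms by (simp add: is_state_def)
  show "sepc (\<lambda>x y. \<sigma> x y / 3 + id_mat x y / 6)"
    using state_sep_aux[OF chol[of \<sigma>]] assms tr by (simp add: is_state_def)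
  have e: "(\<lambda>x y. \<sigma> x y / 3 + id_mat x y / 6) = (\<lambda>x y. of_real (1/3) * \<sigma> x y + of_real (1/6) * id_mat x y)"
    by (simp add: fun_eq_iff)
  have q: "cinner v (mvmult (\<lambda>x y. of_real (1/3) * \<sigma> x y + of_real (1/6) * id_mat x y) v)
      = of_real (1/3) * cinner v (mvmult \<sigma> v) + of_real (1/6) * cinner v v" for v
    unfolding mv_lin by (simp add: cinner_def sum.distrib sum_distrib_left distrib_left mult_ac)
  have "positive_op (\<lambda>x y. of_real (1/3) * \<sigma> x y + of_real (1/6) * id_mat x y)"
    unfolding positive_op_def
  proof
    fix v :: "(bool \<times> bool) cvec"
    have p: "Im (cinner v (mvmult \<sigma> v)) = 0 \<and> 0 \<le> Re (cinner v (mvmult \<sigma> v))"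
      using assms by (simp add: is_state_def positive_op_def)
    have "Im (cinner v v) = 0 \<and> 0 \<le> Re (cinner v v)" unfolding cinner_self by (simp add: sum_nonneg)
    with p show "Im (cinner v (mvmult (\<lambda>x y. of_real (1/3) * \<sigma> x y + of_real (1/6) * id_mat x y) v)) = 0 \<and>
        0 \<le> Re (cinner v (mvmult (\<lambda>x y. of_real (1/3) * \<sigma> x y + of_real (1/6) * id_mat x y) v))"
      unfolding q by simp
  qed
  moreover have "mtrace (\<lambda>x y. \<sigma> x y / 3 + id_mat x y / 6) = 1"
    using tr mtrace_id_bb by (simp add: mtrace_def sum.distrib sum_divide_distrib[symmetric])
  ultimately show "is_state (\<lambda>x y. \<sigma> x y / 3 + id_mat x y / 6)"
    unfolding is_state_def e by simp
qed

lemma hs_eq: "hs_norm_sq (A::('i::finite) cmat) = (\<Sum>x\<in>UNIV. \<Sum>y\<in>UNIV. (cmod (A x y))^2)"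
proof -
  have "hs_norm_sq A = (\<Sum>i\<in>UNIV. \<Sum>j\<in>UNIV. (cmod (A j i))^2)"
    by (simp add: hs_norm_sq_def mtrace_def mmult_def adjoint_def Re_sum cnj_mult_self)
  also have "\<dots> = (\<Sum>x\<in>UNIV. \<Sum>y\<in>UNIV. (cmod (A x y))^2)"
    by (rule sum.swap)
  finally show ?thesis .
qed

lemma hs_nonneg: "0 \<le> hs_norm_sq (A::('i::finite) cmat)"
  unfolding hs_eq by (intro sum_nonneg) simp

lemma cmod_lin_sq:
  "(cmod (of_real \<alpha> * z + of_real \<beta> * (if b then 1 else 0)))^2 =
     \<alpha>^2 * (cmod z)^2 + (if b then 2 * \<alpha> * \<beta> * Re z + \<beta>^2 else 0)"
  apply (cases b)
   apply (simp_all only: cmod_power2 if_True if_False)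
   apply (simp_all add: power2_eq_square algebra_simps)
  done

lemma hs_lin:
  "(\<Sum>x\<in>UNIV. \<Sum>y\<in>UNIV. (cmod (of_real \<alpha> * A x y + of_real \<beta> * id_mat x y))^2)
   = \<alpha>^2 * (\<Sum>x\<in>UNIV. \<Sum>y\<in>UNIV. (cmod ((A::('i::finite) cmat) x y))^2)
     + 2 * \<alpha> * \<beta> * Re (mtrace A) + \<beta>^2 * real (card (UNIV :: 'i set))"
proof -
  have "(\<Sum>x\<in>UNIV. \<Sum>y\<in>UNIV. (cmod (of_real \<alpha> * A x y + of_real \<beta> * id_mat x y))^2)
     = (\<Sum>x\<in>UNIV. \<Sum>y\<in>UNIV. \<alpha>^2 * (cmod (A x y))^2 + (if x = y then 2 * \<alpha> * \<beta> * Re (A x x) + \<beta>^2 else 0))"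
    unfolding id_mat_def cmod_lin_sq by (intro sum.cong refl) (auto simp: if_distrib cong: if_cong)
  also have "\<dots> = (\<Sum>x\<in>UNIV. \<alpha>^2 * (\<Sum>y\<in>UNIV. (cmod (A x y))^2) + (2 * \<alpha> * \<beta> * Re (A x x) + \<beta>^2))"
    by (simp add: sum.distrib sum_distrib_left)
  also have "\<dots> = \<alpha>^2 * (\<Sum>x\<in>UNIV. \<Sum>y\<in>UNIV. (cmod (A x y))^2)
     + 2 * \<alpha> * \<beta> * Re (mtrace A) + \<beta>^2 * real (card (UNIV :: 'i set))"
    by (simp add: sum.distrib sum_distrib_left mtrace_def Re_sum)
  finally show ?thesis .
qed

lemma purity_le:
  assumes "is_state (\<sigma>::('i::finite) cmat)"
  shows "(\<Sum>x\<in>UNIV. \<Sum>y\<in>UNIV. (cmod (\<sigma> x y))^2) \<le> 1"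
proof -
  have pos: "positive_op \<sigma>" and tr: "mtrace \<sigma> = 1" using assms by (auto simp: is_state_def)
  have "(\<Sum>x\<in>UNIV. \<Sum>y\<in>UNIV. (cmod (\<sigma> x y))^2) \<le> (\<Sum>x\<in>UNIV. \<Sum>y\<in>UNIV. Re (\<sigma> x x) * Re (\<sigma> y y))"
    by (intro sum_mono pos_minor[OF pos])
  also have "\<dots> = (\<Sum>x\<in>UNIV. Re (\<sigma> x x)) * (\<Sum>y\<in>UNIV. Re (\<sigma> y y))"
    by (simp add: sum_product)
  also have "(\<Sum>x\<in>UNIV. Re (\<sigma> x x)) = 1" using tr by (simp add: mtrace_def flip: Re_sum)
  finally show ?thesis by simp
qed

lemma E_HS_le:
  assumes "disentangled \<rho>"
  shows "E_HS \<sigma> \<le> hs_norm_sq (\<lambda>i j. \<rho> i j - \<sigma> i j)"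
  unfolding E_HS_def
proof (rule cInf_lower)
  show "hs_norm_sq (\<lambda>i j. \<rho> i j - \<sigma> i j) \<in> {hs_norm_sq (\<lambda>i j. \<rho> i j - \<sigma> i j) |\<rho>. disentangled \<rho>}"
    using assms by blast
  show "bdd_below {hs_norm_sq (\<lambda>i j. \<rho> i j - \<sigma> i j) |\<rho>. disentangled \<rho>}"
    by (rule bdd_belowI[of _ 0]) (auto simp: hs_nonneg)
qed

lemma part2:
  assumes "is_state (\<sigma>::(bool \<times> bool) cmat)"
  shows "E_HS \<sigma> \<le> 1/3"
proof -
  define \<rho> where "\<rho> = (\<lambda>x y. \<sigma> x y / 3 + id_mat x y / 6)"
  have d: "disentangled \<rho>" unfolding \<rho>_def by (rule state_mix[OF assms])
  have e: "(\<lambda>i j. \<rho> i j - \<sigma> i j) = (\<lambda>i j. of_real (-2/3) * \<sigma> i j + of_real (1/6) * id_mat i j)"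
    by (simp add: \<rho>_def fun_eq_iff field_simps)
  have tr: "mtrace \<sigma> = 1" using assms by (simp add: is_state_def)
  have card: "card (UNIV :: (bool \<times> bool) set) = 4" by (simp add: UNIV_Times_UNIV[symmetric] card_cartesian_product card_UNIV_bool del: UNIV_Times_UNIV)
  have "hs_norm_sq (\<lambda>i j. \<rho> i j - \<sigma> i j) = 4/9 * (\<Sum>x\<in>UNIV. \<Sum>y\<in>UNIV. (cmod (\<sigma> x y))^2) - 1/9"
    unfolding e hs_eq hs_lin tr card by (simp add: power2_eq_square)
  also have "\<dots> \<le> 1/3" using purity_le[OF assms] by simp
  finally show ?thesis using E_HS_le[OF d, of \<sigma>] by simp
qed

lemma r2: "complex_of_real (1 / sqrt 2) * complex_of_real (1 / sqrt 2) = 1/2"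
proof -
  have h: "(1 / sqrt 2) * (1 / sqrt 2) = (1/2::real)" by simp
  have "complex_of_real (1 / sqrt 2) * complex_of_real (1 / sqrt 2) = complex_of_real ((1 / sqrt 2) * (1 / sqrt 2))"
    by (rule of_real_mult[symmetric])
  also have "\<dots> = complex_of_real (1/2)" by (simp only: h)
  also have "\<dots> = 1/2" by simp
  finally show ?thesis .
qed

lemma r2': "complex_of_real (sqrt 2) * complex_of_real (sqrt 2) = 2"
proof -
  have "complex_of_real (sqrt 2) * complex_of_real (sqrt 2) = complex_of_real (sqrt 2 * sqrt 2)"
    by (rule of_real_mult[symmetric])
  also have "sqrt 2 * sqrt 2 = (2::real)" by simp
  finally show ?thesis by simp
qed

lemma psi1_norm: "cinner psi1 psi1 = 1"
  by (simp add: cinner_def psi1_def sum_bb r2 r2')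

lemma psi1_overlap:
  "cinner psi1 (mvmult (kron s1 s2) psi1) =
     (s1 False False * s2 False False + s1 False True * s2 False True
      + s1 True False * s2 True False + s1 True True * s2 True True) / 2"
proof -
  have "cinner psi1 (mvmult (kron s1 s2) psi1) =
     complex_of_real (1 / sqrt 2) * complex_of_real (1 / sqrt 2) *
     (s1 False False * s2 False False + s1 False True * s2 False True
      + s1 True False * s2 True False + s1 True True * s2 True True)"
    by (simp add: cinner_def mvmult_def psi1_def kron_def sum_bb algebra_simps r2')
  then show ?thesis unfolding r2 by simp
qed

lemma two_xy:
  fixes X Y a b :: real
  assumes "0 \<le> X" "0 \<le> Y" "X^2 \<le> a * (1 - a)" "Y^2 \<le> b * (1 - b)"
    "0 \<le> a" "a \<le> 1" "0 \<le> b" "b \<le> 1"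
  shows "2 * X * Y \<le> a * (1 - b) + b * (1 - a)"
proof (rule power2_le_imp_le)
  have "(2 * X * Y)^2 = 4 * X^2 * Y^2" by (simp add: power2_eq_square)
  also have "\<dots> \<le> 4 * (a * (1 - a)) * (b * (1 - b))"
    using assms by (intro mult_mono) (auto simp: mult_nonneg_nonneg)
  also have "\<dots> \<le> (a * (1 - b) + b * (1 - a))^2"
  proof -
    have "0 \<le> (a * (1 - b) - b * (1 - a))^2" by simp
    then show ?thesis by (simp add: power2_eq_square algebra_simps)
  qed
  finally show "(2 * X * Y)^2 \<le> (a * (1 - b) + b * (1 - a))^2" .
  show "0 \<le> a * (1 - b) + b * (1 - a)" using assms by simp
qed

lemma bell_overlap:
  assumes "is_state (s1::bool cmat)" "is_state s2"
  shows "Re (cinner psi1 (mvmult (kron s1 s2) psi1)) \<le> 1/2"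
proof -
  have p1: "positive_op s1" and t1: "s1 False False + s1 True True = 1"
    using assms(1) by (auto simp: is_state_def mtrace_def sum_bool)
  have p2: "positive_op s2" and t2: "s2 False False + s2 True True = 1"
    using assms(2) by (auto simp: is_state_def mtrace_def sum_bool)
  define a where "a = Re (s1 False False)"
  define b where "b = Re (s2 False False)"
  define x where "x = s1 False True"
  define y where "y = s2 False True"
  have a1: "s1 False False = of_real a" using pos_diag[OF p1, of False] a_def by simp
  have b1: "s2 False False = of_real b" using pos_diag[OF p2, of False] b_def by simp
  have a2: "s1 True True = of_real (1 - a)" using t1 a1 by (simp add: algebra_simps)
  have b2: "s2 True True = of_real (1 - b)" using t2 b1 by (simp add: algebra_simps)
  have a0: "0 \<le> a" "a \<le> 1" using pos_diag(2)[OF p1, of False] pos_diag(2)[OF p1, of True] a2 a_def by auto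
  have b0: "0 \<le> b" "b \<le> 1" using pos_diag(2)[OF p2, of False] pos_diag(2)[OF p2, of True] b2 b_def by auto
  have hx: "s1 True False = cnj x" using pos_herm[OF p1, of False True] x_def by simp
  have hy: "s2 True False = cnj y" using pos_herm[OF p2, of False True] y_def by simp
  have mx: "(cmod x)^2 \<le> a * (1 - a)" using pos_minor[OF p1, of False True] a1 a2 x_def by simp
  have my: "(cmod y)^2 \<le> b * (1 - b)" using pos_minor[OF p2, of False True] b1 b2 y_def by simp
  have "Re (x * y) \<le> cmod (x * y)" by (rule complex_Re_le_cmod)
  also have "\<dots> = cmod x * cmod y" by (simp add: norm_mult)
  finally have rxy: "Re (x * y) \<le> cmod x * cmod y" .
  have "2 * cmod x * cmod y \<le> a * (1 - b) + b * (1 - a)"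
    by (rule two_xy) (use mx my a0 b0 in auto)
  moreover have "Re (cinner psi1 (mvmult (kron s1 s2) psi1)) = (a * b + (1 - a) * (1 - b) + 2 * Re (x * y)) / 2"
    unfolding psi1_overlap a1 a2 b1 b2 hx hy x_def[symmetric] y_def[symmetric]
    by (simp add: algebra_simps)
  ultimately show ?thesis using rxy by (simp add: algebra_simps)
qed

lemma cinner_conj_W:
  "cinner (mvmult W x) (mvmult K (mvmult W y)) = cinner x (mvmult (mmult (adjoint W) (mmult K W)) (y::('i::finite) cvec))"
  by (simp add: cinner_mv_adj mvmult_mmult)

lemma phi_norm:
  assumes "unitary U" "unitary V"
  shows "cinner (mvmult (kron U V) psi1) (mvmult (kron U V) psi1) = 1"
proof -
  have "cinner (mvmult (kron U V) psi1) (mvmult (kron U V) psi1) =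
        cinner psi1 (mvmult (mmult (adjoint (kron U V)) (kron U V)) psi1)"
    by (simp add: cinner_mv_adj mvmult_mmult)
  also have "mmult (adjoint (kron U V)) (kron U V) = id_mat"
    using assms by (simp add: adjoint_kron mmult_kron unitary_def kron_id)
  finally show ?thesis by (simp add: mvmult_id psi1_norm)
qed

lemma cinner_mv_sum:
  "cinner x (mvmult (\<lambda>i j. \<Sum>k\<in>S. c k * M k i j) y) = (\<Sum>k\<in>S. c k * cinner x (mvmult (M k) (y::('i::finite) cvec)))"
proof -
  have "cinner x (mvmult (\<lambda>i j. \<Sum>k\<in>S. c k * M k i j) y) = (\<Sum>i\<in>UNIV. \<Sum>k\<in>S. \<Sum>j\<in>UNIV. cnj (x i) * (c k * M k i j * y j))"
    unfolding cinner_def mvmult_def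
    by (simp add: sum_distrib_left sum_distrib_right sum.swap[of _ UNIV S])
  also have "\<dots> = (\<Sum>k\<in>S. \<Sum>i\<in>UNIV. \<Sum>j\<in>UNIV. cnj (x i) * (c k * M k i j * y j))"
    by (rule sum.swap)
  also have "\<dots> = (\<Sum>k\<in>S. c k * cinner x (mvmult (M k) y))"
    unfolding cinner_def mvmult_def by (simp add: sum_distrib_left mult_ac)
  finally show ?thesis .
qed

lemma sep_overlap:
  assumes U: "unitary U" and V: "unitary V" and d: "disentangled \<rho>"
  defines "\<phi> \<equiv> mvmult (kron U V) psi1"
  shows "Re (cinner \<phi> (mvmult \<rho> \<phi>)) \<le> 1/2"
proof -
  obtain n :: nat and p :: "nat \<Rightarrow> real" and r1 r2 :: "nat \<Rightarrow> bool cmat" where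
    h: "\<forall>k<n. p k \<ge> 0 \<and> is_state (r1 k) \<and> is_state (r2 k)" and sp: "(\<Sum>k<n. p k) = 1"
    and X: "\<rho> = (\<lambda>x y. \<Sum>k<n. complex_of_real (p k) * kron (r1 k) (r2 k) x y)"
    using d unfolding disentangled_def by (elim conjE exE) (rule that, assumption+)
  have one: "Re (cinner \<phi> (mvmult (kron (r1 k) (r2 k)) \<phi>)) \<le> 1/2" if "k < n" for k
  proof -
    have "cinner \<phi> (mvmult (kron (r1 k) (r2 k)) \<phi>) =
       cinner psi1 (mvmult (mmult (adjoint (kron U V)) (mmult (kron (r1 k) (r2 k)) (kron U V))) psi1)"
      unfolding \<phi>_def by (rule cinner_conj_W)
    also have "mmult (adjoint (kron U V)) (mmult (kron (r1 k) (r2 k)) (kron U V)) =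
        kron (mmult (adjoint U) (mmult (r1 k) U)) (mmult (adjoint V) (mmult (r2 k) V))"
      by (simp add: adjoint_kron mmult_kron)
    finally show ?thesis
      using bell_overlap[OF conj_state[OF U] conj_state[OF V]] h that by simp
  qed
  have "Re (cinner \<phi> (mvmult \<rho> \<phi>)) = (\<Sum>k<n. p k * Re (cinner \<phi> (mvmult (kron (r1 k) (r2 k)) \<phi>)))"
    unfolding X cinner_mv_sum by (simp add: Re_sum)
  also have "\<dots> \<le> (\<Sum>k<n. p k * (1/2))"
    using h one by (intro sum_mono mult_left_mono) auto
  also have "\<dots> = (\<Sum>k<n. p k) * (1/2)" by (rule sum_distrib_right[symmetric])
  also have "\<dots> = 1/2" using sp by simp
  finally show ?thesis .
qed

lemma cmod_add_sq: "(cmod (x + of_real c * w))^2 = (cmod x)^2 + 2 * c * Re (cnj x * w) + c^2 * (cmod w)^2"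
  by (simp only: cmod_power2) (simp add: power2_eq_square algebra_simps)

lemma lower:
  assumes U: "unitary U" and V: "unitary V" and d: "disentangled \<rho>"
  shows "1/3 \<le> hs_norm_sq (\<lambda>i j. \<rho> i j - bell_proj U V i j)"
proof -
  define \<phi> where "\<phi> = mvmult (kron U V) psi1"
  have n1: "cinner \<phi> \<phi> = 1" unfolding \<phi>_def by (rule phi_norm[OF U V])
  have Peq: "bell_proj U V = (\<lambda>i j. \<phi> i * cnj (\<phi> j))"
    unfolding bell_proj_def proj_line_def \<phi>_def[symmetric] n1 by simp
  define P where "P = (\<lambda>i j. \<phi> i * cnj (\<phi> j))"
  have s1: "(\<Sum>x\<in>UNIV. (cmod (\<phi> x))^2) = 1"
  proof -
    have "complex_of_real (\<Sum>x\<in>UNIV. (cmod (\<phi> x))^2) = 1" using n1 unfolding cinner_self .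
    then show ?thesis by (simp only: of_real_eq_1_iff)
  qed
  have SP: "(\<Sum>x\<in>UNIV. \<Sum>y\<in>UNIV. (cmod (P x y))^2) = 1"
  proof -
    have "(\<Sum>x\<in>UNIV. \<Sum>y\<in>UNIV. (cmod (P x y))^2) = (\<Sum>x\<in>UNIV. (cmod (\<phi> x))^2) * (\<Sum>y\<in>UNIV. (cmod (\<phi> y))^2)"
      by (simp add: P_def norm_mult power_mult_distrib sum_product)
    then show ?thesis using s1 by simp
  qed
  have trP: "mtrace P = 1" using n1 by (simp add: P_def mtrace_def cinner_def mult.commute)
  have trr: "mtrace \<rho> = 1" using d by (simp add: disentangled_def is_state_def)
  have card: "card (UNIV :: (bool \<times> bool) set) = 4"
    by (simp add: UNIV_Times_UNIV[symmetric] card_cartesian_product card_UNIV_bool del: UNIV_Times_UNIV)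
  define W where "W = (\<lambda>x y. of_real 1 * P x y + of_real (-1/4) * id_mat x y)"
  have SW: "(\<Sum>x\<in>UNIV. \<Sum>y\<in>UNIV. (cmod (W x y))^2) = 3/4"
    unfolding W_def hs_lin SP trP card by (simp add: power2_eq_square)
  define X where "X = (\<lambda>x y. \<rho> x y - P x y)"
  have pw: "Re (cnj (X x y) * W x y) = Re (cnj (\<rho> x y) * P x y) - (cmod (P x y))^2
      + (if x = y then (Re (P x x) - Re (\<rho> x x)) / 4 else 0)" for x y
    by (cases "x = y") (simp_all only: cmod_power2, simp_all add: X_def W_def id_mat_def algebra_simps power2_eq_square add_divide_distrib diff_divide_distrib)
  have ov: "(\<Sum>x\<in>UNIV. \<Sum>y\<in>UNIV. Re (cnj (\<rho> x y) * P x y)) = Re (cinner \<phi> (mvmult \<rho> \<phi>))"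
  proof -
    have "(\<Sum>x\<in>UNIV. \<Sum>y\<in>UNIV. cnj (\<rho> x y) * P x y) = cnj (cinner \<phi> (mvmult \<rho> \<phi>))"
      by (simp add: P_def cinner_def mvmult_def sum_distrib_left mult_ac)
    then have "Re (\<Sum>x\<in>UNIV. \<Sum>y\<in>UNIV. cnj (\<rho> x y) * P x y) = Re (cinner \<phi> (mvmult \<rho> \<phi>))" by simp
    then show ?thesis by (simp add: Re_sum)
  qed
  have dg: "(\<Sum>x\<in>UNIV. \<Sum>y\<in>UNIV. (if x = y then (Re (P x x) - Re (\<rho> x x)) / 4 else 0)) = (0::real)"
  proof -
    have "(\<Sum>x\<in>UNIV. \<Sum>y\<in>UNIV. (if x = y then (Re (P x x) - Re (\<rho> x x)) / 4 else 0))
        = (\<Sum>x\<in>UNIV. (Re (P x x) - Re (\<rho> x x)) / 4)" by simp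
    also have "\<dots> = (Re (mtrace P) - Re (mtrace \<rho>)) / 4"
      by (simp add: mtrace_def Re_sum sum_subtractf flip: sum_divide_distrib)
    finally show ?thesis using trP trr by simp
  qed
  have R: "(\<Sum>x\<in>UNIV. \<Sum>y\<in>UNIV. Re (cnj (X x y) * W x y)) \<le> -1/2"
  proof -
    have "(\<Sum>x\<in>UNIV. \<Sum>y\<in>UNIV. Re (cnj (X x y) * W x y)) =
       (\<Sum>x\<in>UNIV. \<Sum>y\<in>UNIV. Re (cnj (\<rho> x y) * P x y)) - (\<Sum>x\<in>UNIV. \<Sum>y\<in>UNIV. (cmod (P x y))^2)
       + (\<Sum>x\<in>UNIV. \<Sum>y\<in>UNIV. (if x = y then (Re (P x x) - Re (\<rho> x x)) / 4 else 0))"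
      unfolding pw by (simp add: sum.distrib sum_subtractf)
    also have "\<dots> = Re (cinner \<phi> (mvmult \<rho> \<phi>)) - 1"
      unfolding ov SP dg by simp
    also have "\<dots> \<le> -1/2" using sep_overlap[OF U V d] unfolding \<phi>_def by simp
    finally show ?thesis .
  qed
  have "0 \<le> (\<Sum>x\<in>UNIV. \<Sum>y\<in>UNIV. (cmod (X x y + of_real (2/3) * W x y))^2)"
    by (intro sum_nonneg) simp
  also have "\<dots> = (\<Sum>x\<in>UNIV. \<Sum>y\<in>UNIV. (cmod (X x y))^2)
      + 4/3 * (\<Sum>x\<in>UNIV. \<Sum>y\<in>UNIV. Re (cnj (X x y) * W x y))
      + 4/9 * (\<Sum>x\<in>UNIV. \<Sum>y\<in>UNIV. (cmod (W x y))^2)"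
  proof -
    have e: "(cmod (X x y + of_real (2/3) * W x y))^2 = (cmod (X x y))^2 + 4/3 * Re (cnj (X x y) * W x y) + 4/9 * (cmod (W x y))^2" for x y
      unfolding cmod_add_sq by (simp add: power2_eq_square)
    show ?thesis by (simp only: e sum.distrib sum_distrib_left[symmetric])
  qed
  finally have "1/3 \<le> (\<Sum>x\<in>UNIV. \<Sum>y\<in>UNIV. (cmod (X x y))^2)"
    using R SW by simp
  then show ?thesis unfolding hs_eq Peq X_def P_def .
qed

lemma bell_state:
  assumes U: "unitary U" and V: "unitary V"
  shows "is_state (bell_proj U V)"
proof -
  define \<phi> where "\<phi> = mvmult (kron U V) psi1"
  have n1: "cinner \<phi> \<phi> = 1" unfolding \<phi>_def by (rule phi_norm[OF U V])
  have Peq: "bell_proj U V = (\<lambda>i j. \<phi> i * cnj (\<phi> j))"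
    unfolding bell_proj_def proj_line_def \<phi>_def[symmetric] n1 by simp
  show ?thesis unfolding Peq by (rule outer_state[OF n1])
qed

theorem corollary1:
  fixes U V :: "bool cmat"
  assumes "unitary U" and "unitary V"
  shows "E_HS (bell_proj U V) = 1/3 \<and>
         (\<forall>\<sigma> :: (bool \<times> bool) cmat. is_state \<sigma> \<longrightarrow> E_HS \<sigma> \<le> 1/3)"
proof
  have st: "is_state (bell_proj U V)" by (rule bell_state[OF assms])
  have le: "E_HS (bell_proj U V) \<le> 1/3" by (rule part2[OF st])
  have ge: "1/3 \<le> E_HS (bell_proj U V)"
    unfolding E_HS_def
  proof (rule cInf_greatest)
    show "{hs_norm_sq (\<lambda>i j. \<rho> i j - bell_proj U V i j) |\<rho>. disentangled \<rho>} \<noteq> {}"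
      using state_mix[OF st] by blast
    show "\<And>x. x \<in> {hs_norm_sq (\<lambda>i j. \<rho> i j - bell_proj U V i j) |\<rho>. disentangled \<rho>} \<Longrightarrow> 1/3 \<le> x"
      using lower[OF assms] by blast
  qed
  show "E_HS (bell_proj U V) = 1/3" using le ge by simp
  show "\<forall>\<sigma> :: (bool \<times> bool) cmat. is_state \<sigma> \<longrightarrow> E_HS \<sigma> \<le> 1/3"
    using part2 by blast
qed

end
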